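(* Let $(M,\cdot,1)$ be a monoid, $\Sigma$ a finite alphabet, $A=(Q,\Sigma,u,i_u,\delta,w,\rho)$ an $M$-DFA and $(g^\pi_A,f^\pi_A)$ the factorization on $L$ induced by $A$ for a selection function $\pi$. Let $N=N^{(g^\pi_A,f^\pi_A)}(f^\pi_A(\mathcal{A}),g^\pi_A(\mathcal{A}))$. Then: 1. $N$ is an $M$-DFA equivalent to $A$; 2. $N$ is transition-equalized; 3. if $A$ is minimal then $N$ is minimal; 4. there exists a minimal and transition-equalized $M$-DFA equivalent to $A$; 5. if $A$ is minimal then $f^\pi_A\circ f^\pi_A=f^\pi_A$; 6. if $A$ is minimal and transition-equalized then $f^{\pi_i}_A=f^{\pi_j}_A$ for any two selection functions $\pi_i,\pi_j$.
   Context: $L$ is the set of all functions $\Sigma^*\to M$; $\varepsilon$ the empty word; $(m\cdot\ell)(\gamma)=m\cdot\ell(\gamma)$; $\Delta_\alpha(\ell)(\gamma)=\ell(\alpha\gamma)$. An $M$-DFA is $A=(Q,\Sigma,u,i_u,\delta,w,\rho)$ with $Q$ finite nonempty, initial state $u$, initial value $i_u\in M$, $\delta:Q\times\Sigma\to Q$, $w:Q\times\Sigma\to M$, $\rho:Q\to M$. Write $q\alpha$ for the extended transition, $w^*(q,\varepsilon)=1$, $w^*(q,\alpha\sigma)=w^*(q,\alpha)\cdot w(q\alpha,\sigma)$; $\mathcal{A}(\alpha)=i_u\cdot w^*(u,\alpha)\cdot\rho(u\alpha)$ is the recognized language and $\mathcal{A}_q(\alpha)=w^*(q,\alpha)\cdot\rho(q\alpha)$.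 Equivalent: same recognized language. Minimal: no equivalent $M$-DFA has fewer states. Transition-equalized: for all $p,q\in Q$, $\sigma,\tau\in\Sigma$, $\Delta_\sigma(\mathcal{A}_q)=\Delta_\tau(\mathcal{A}_p)$ implies $\delta(q,\sigma)=\delta(p,\tau)$ and $w(q,\sigma)=w(p,\tau)$. Induced factorization: $P_A=\{((\sigma,q),\Delta_\sigma(\mathcal{A}_q))\mid\sigma\in\Sigma,q\in Q\}\cup\{((\varepsilon,u),\mathcal{A})\}$, with $\approx_A$ identifying elements with equal language component; a selection function $\pi$ chooses a representative in each class, always choosing $((\varepsilon,u),\mathcal{A})$ for its class. $f^\pi_A(\mathcal{A})=\mathcal{A}_u$, $g^\pi_A(\mathcal{A})=i_u$; if $\ell\neq\mathcal{A}$ is the language component of a class with chosen representative $((\sigma,q),\Delta_\sigma(\mathcal{A}_q))$, then $f^\pi_A(\ell)=\mathcal{A}_{q\sigma}$, $g^\pi_A(\ell)=w(q,\sigma)$; otherwise $f^\pi_A(\ell)=\ell$, $g^\pi_A(\ell)=1$. For $g:L\to M$, $f:L\to L$ with $g(\ell)\cdot f(\ell)=\ell$ for all $\ell$, let $S^{(g,f)}_\varepsilon=\mathrm{id}_L$, $S^{(g,f)}_{\alpha\sigma}=f\circ\Delta_\sigma\circ S^{(g,f)}_\alpha$. For $\ell\in L$, $m\in M$, $N^{(g,f)}(\ell,m)$ is the automaton with state set $\{S^{(g,f)}_\alpha(\ell)\mid\alpha\in\Sigma^*\}$, initial state $\ell$, initial value $m$, $\delta(S^{(g,f)}_\alpha(\ell),\sigma)=S^{(g,f)}_{\alpha\sigma}(\ell)$,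 $w(S^{(g,f)}_\alpha(\ell),\sigma)=g(\Delta_\sigma(S^{(g,f)}_\alpha(\ell)))$, $\rho(S^{(g,f)}_\alpha(\ell))=(S^{(g,f)}_\alpha(\ell))(\varepsilon)$. *)

theory Defs
  imports Main
begin

type_synonym ('a, 'm) lang = "'a list \<Rightarrow> 'm"

definition lscale :: "'m::monoid_mult \<Rightarrow> ('a, 'm) lang \<Rightarrow> ('a, 'm) lang" where
  "lscale m l = (\<lambda>\<gamma>. m * l \<gamma>)"

definition ldelta :: "'a list \<Rightarrow> ('a, 'm) lang \<Rightarrow> ('a, 'm) lang" where
  "ldelta \<alpha> l = (\<lambda>\<gamma>. l (\<alpha> @ \<gamma>))"

record ('q, 'a, 'm) mdfa =
  states :: "'q set"
  init :: 'q
  ival :: 'm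
  delta :: "'q \<Rightarrow> 'a \<Rightarrow> 'q"
  wt :: "'q \<Rightarrow> 'a \<Rightarrow> 'm"
  rho :: "'q \<Rightarrow> 'm"

definition is_mdfa :: "('q, 'a, 'm) mdfa \<Rightarrow> bool" where
  "is_mdfa A \<longleftrightarrow> finite (states A) \<and> states A \<noteq> {} \<and> init A \<in> states A
     \<and> (\<forall>q\<in>states A. \<forall>\<sigma>. delta A q \<sigma> \<in> states A)"

definition dstar :: "('q, 'a, 'm) mdfa \<Rightarrow> 'q \<Rightarrow> 'a list \<Rightarrow> 'q" where
  "dstar A q \<alpha> = foldl (delta A) q \<alpha>"

fun wstar :: "('q, 'a, 'm::monoid_mult) mdfa \<Rightarrow> 'q \<Rightarrow> 'a list \<Rightarrow> 'm" where
  "wstar A q \<alpha> = (if \<alpha> = [] then 1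
      else wstar A q (butlast \<alpha>) * wt A (dstar A q (butlast \<alpha>)) (last \<alpha>))"

declare wstar.simps[simp del]

definition lang :: "('q, 'a, 'm::monoid_mult) mdfa \<Rightarrow> ('a, 'm) lang" where
  "lang A = (\<lambda>\<alpha>. ival A * wstar A (init A) \<alpha> * rho A (dstar A (init A) \<alpha>))"

definition lang_q :: "('q, 'a, 'm::monoid_mult) mdfa \<Rightarrow> 'q \<Rightarrow> ('a, 'm) lang" where
  "lang_q A q = (\<lambda>\<alpha>. wstar A q \<alpha> * rho A (dstar A q \<alpha>))"

definition equivalent :: "('q, 'a, 'm::monoid_mult) mdfa \<Rightarrow> ('p, 'a, 'm) mdfa \<Rightarrow> bool" where
  "equivalent A B \<longleftrightarrow> lang A = lang B"

text \<open>Minimality: no equivalent M-DFA has fewer states.  Since every finite state set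
  can be renamed injectively into nat, it suffices to compare with M-DFAs whose
  states are natural numbers.\<close>
definition minimal :: "('q, 'a, 'm::monoid_mult) mdfa \<Rightarrow> bool" where
  "minimal A \<longleftrightarrow> is_mdfa A \<and>
     (\<forall>B :: (nat, 'a, 'm) mdfa. is_mdfa B \<and> equivalent B A \<longrightarrow> card (states A) \<le> card (states B))"

definition transition_equalized :: "('q, 'a, 'm::monoid_mult) mdfa \<Rightarrow> bool" where
  "transition_equalized A \<longleftrightarrow>
     (\<forall>p\<in>states A. \<forall>q\<in>states A. \<forall>\<sigma> \<tau>.
        ldelta [\<sigma>] (lang_q A q) = ldelta [\<tau>] (lang_q A p) \<longrightarrow>
          delta A q \<sigma> = delta A p \<tau> \<and> wt A q \<sigma> = wt A p \<tau>)"

text \<open>The set P_A.  An index (Some sigma, q) stands for (sigma, q); the index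
  (None, u) stands for (epsilon, u).\<close>
definition PA :: "('q, 'a, 'm::monoid_mult) mdfa \<Rightarrow> (('a option \<times> 'q) \<times> ('a, 'm) lang) set" where
  "PA A = {((Some \<sigma>, q), ldelta [\<sigma>] (lang_q A q)) | \<sigma> q. q \<in> states A}
          \<union> {((None, init A), lang A)}"

text \<open>A selection function picks, for each class of the relation approx_A (i.e. for each
  language component l of P_A), a representative ((pi l), l) of that class, and picks
  ((epsilon,u), lang A) for the class of lang A.\<close>
definition is_selection :: "('q, 'a, 'm::monoid_mult) mdfa \<Rightarrow> (('a, 'm) lang \<Rightarrow> 'a option \<times> 'q) \<Rightarrow> bool" where
  "is_selection A \<pi> \<longleftrightarrow> (\<forall>l \<in> snd ` PA A. (\<pi> l, l) \<in> PA A) \<and> \<pi> (lang A) = (None, init A)"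

definition fact_f :: "('q, 'a, 'm::monoid_mult) mdfa \<Rightarrow> (('a, 'm) lang \<Rightarrow> 'a option \<times> 'q)
     \<Rightarrow> ('a, 'm) lang \<Rightarrow> ('a, 'm) lang" where
  "fact_f A \<pi> l =
     (if l = lang A then lang_q A (init A)
      else if l \<in> snd ` PA A then
        (case \<pi> l of (Some \<sigma>, q) \<Rightarrow> lang_q A (delta A q \<sigma>) | (None, _) \<Rightarrow> l)
      else l)"

definition fact_g :: "('q, 'a, 'm::monoid_mult) mdfa \<Rightarrow> (('a, 'm) lang \<Rightarrow> 'a option \<times> 'q)
     \<Rightarrow> ('a, 'm) lang \<Rightarrow> 'm" where
  "fact_g A \<pi> l =
     (if l = lang A then ival A
      else if l \<in> snd ` PA A then
        (case \<pi> l of (Some \<sigma>, q) \<Rightarrow> wt A q \<sigma> | (None, _) \<Rightarrow> 1)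
      else 1)"

definition Sgf :: "(('a, 'm) lang \<Rightarrow> ('a, 'm) lang) \<Rightarrow> 'a list \<Rightarrow> ('a, 'm) lang \<Rightarrow> ('a, 'm) lang" where
  "Sgf f \<alpha> l = foldl (\<lambda>s \<sigma>. f (ldelta [\<sigma>] s)) l \<alpha>"

text \<open>The automaton N^(g,f)(l, m).  Its transition on state S_alpha(l) and letter sigma is
  S_(alpha sigma)(l) = f(Delta_sigma(S_alpha(l))), which depends only on the state.\<close>
definition Naut :: "(('a, 'm) lang \<Rightarrow> 'm) \<Rightarrow> (('a, 'm) lang \<Rightarrow> ('a, 'm) lang)
     \<Rightarrow> ('a, 'm) lang \<Rightarrow> 'm \<Rightarrow> (('a, 'm) lang, 'a, 'm) mdfa" where
  "Naut g f l m =
     \<lparr> states = {Sgf f \<alpha> l | \<alpha>. True},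
       init = l,
       ival = m,
       delta = (\<lambda>s \<sigma>. f (ldelta [\<sigma>] s)),
       wt = (\<lambda>s \<sigma>. g (ldelta [\<sigma>] s)),
       rho = (\<lambda>s. s []) \<rparr>"

end

theory Submission
  imports Defs
begin


lemma wstar_Nil[simp]: "wstar A q [] = 1"
  by (subst wstar.simps) simp

lemma wstar_snoc: "wstar A q (\<alpha> @ [\<sigma>]) = wstar A q \<alpha> * wt A (dstar A q \<alpha>) \<sigma>"
  by (subst wstar.simps) simp

lemma dstar_Nil[simp]: "dstar A q [] = q" by (simp add: dstar_def)
lemma dstar_Cons[simp]: "dstar A q (\<sigma> # \<gamma>) = dstar A (delta A q \<sigma>) \<gamma>" by (simp add: dstar_def)

lemma wstar_Cons: "wstar A q (\<sigma> # \<gamma>) = wt A q \<sigma> * wstar A (delta A q \<sigma>) \<gamma>"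
proof (induction \<gamma> rule: rev_induct)
  case Nil
  then show ?case using wstar_snoc[of A q "[]" \<sigma>] by simp
next
  case (snoc x xs)
  have "wstar A q (\<sigma> # xs @ [x]) = wstar A q (\<sigma> # xs) * wt A (dstar A q (\<sigma> # xs)) x"
    using wstar_snoc[of A q "\<sigma> # xs" x] by simp
  also have "\<dots> = wt A q \<sigma> * wstar A (delta A q \<sigma>) (xs @ [x])"
    using snoc wstar_snoc[of A "delta A q \<sigma>" xs x] by (simp add: mult.assoc)
  finally show ?case .
qed

lemma lang_q_Nil[simp]: "lang_q A q [] = rho A q" by (simp add: lang_q_def)
lemma lang_q_Cons: "lang_q A q (\<sigma> # \<gamma>) = wt A q \<sigma> * lang_q A (delta A q \<sigma>) \<gamma>"
  by (simp add: lang_q_def wstar_Cons mult.assoc)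
lemma lang_eq: "lang A \<gamma> = ival A * lang_q A (init A) \<gamma>"
  by (simp add: lang_def lang_q_def mult.assoc)
lemma ldelta1[simp]: "ldelta [\<sigma>] l \<gamma> = l (\<sigma> # \<gamma>)" by (simp add: ldelta_def)

lemma rename_nat:
  fixes B :: "('q, 'a, 'm::monoid_mult) mdfa"
  assumes "is_mdfa B"
  shows "\<exists>C::(nat,'a,'m) mdfa. is_mdfa C \<and> equivalent C B \<and> card (states C) = card (states B)"
proof -
  have fin: "finite (states B)" using assms by (simp add: is_mdfa_def)
  then obtain h :: "'q \<Rightarrow> nat" where inj: "inj_on h (states B)"
    using finite_imp_inj_to_nat_seg by blast
  define iv where "iv = the_inv_into (states B) h"
  have iv: "\<And>q. q \<in> states B \<Longrightarrow> iv (h q) = q" unfolding iv_def using inj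
    by (simp add: the_inv_into_f_f)
  define C :: "(nat,'a,'m) mdfa" where "C = \<lparr> states = h ` states B, init = h (init B), ival = ival B,
     delta = (\<lambda>n \<sigma>. h (delta B (iv n) \<sigma>)), wt = (\<lambda>n \<sigma>. wt B (iv n) \<sigma>), rho = (\<lambda>n. rho B (iv n)) \<rparr>"
  have cl: "\<And>q \<sigma>. q \<in> states B \<Longrightarrow> delta B q \<sigma> \<in> states B" using assms by (simp add: is_mdfa_def)
  have key: "\<forall>q\<in>states B. lang_q C (h q) \<gamma> = lang_q B q \<gamma>" for \<gamma>
  proof (induction \<gamma>)
    case Nil then show ?case by (simp add: C_def iv)
  next
    case (Cons \<sigma> \<gamma>)
    show ?case
    proof
      fix q assume q: "q \<in> states B"
      have "lang_q C (h q) (\<sigma> # \<gamma>) = wt B q \<sigma> * lang_q C (h (delta B q \<sigma>)) \<gamma>"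
        by (simp add: lang_q_Cons C_def iv q)
      also have "\<dots> = lang_q B q (\<sigma> # \<gamma>)" using Cons cl[OF q] by (simp add: lang_q_Cons)
      finally show "lang_q C (h q) (\<sigma> # \<gamma>) = lang_q B q (\<sigma> # \<gamma>)" .
    qed
  qed
  have "is_mdfa C" using assms fin by (auto simp: is_mdfa_def C_def iv)
  moreover have "equivalent C B" unfolding equivalent_def
  proof
    fix \<gamma>
    have "lang C \<gamma> = ival B * lang_q C (h (init B)) \<gamma>" by (simp add: lang_eq C_def)
    also have "\<dots> = lang B \<gamma>" using key assms by (simp add: lang_eq is_mdfa_def)
    finally show "lang C \<gamma> = lang B \<gamma>" .
  qed
  moreover have "card (states C) = card (states B)" using inj by (simp add: C_def card_image)
  ultimately show ?thesis by blast
qed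

lemma minimal_any:
  fixes A :: "('q, 'a, 'm::monoid_mult) mdfa" and B :: "('p, 'a, 'm) mdfa"
  assumes "minimal A" "is_mdfa B" "equivalent B A"
  shows "card (states A) \<le> card (states B)"
proof -
  obtain C :: "(nat,'a,'m) mdfa" where C: "is_mdfa C" "equivalent C B" "card (states C) = card (states B)"
    using rename_nat[OF assms(2)] by blast
  have "equivalent C A" using C(2) assms(3) by (simp add: equivalent_def)
  then have "card (states A) \<le> card (states C)" using assms(1) C(1) unfolding minimal_def by blast
  then show ?thesis using C(3) by simp
qed



lemma sel_some:
  assumes "is_selection A \<pi>" "l \<in> snd ` PA A" "l \<noteq> lang A"
  shows "\<exists>\<sigma> q. \<pi> l = (Some \<sigma>, q) \<and> q \<in> states A \<and> l = ldelta [\<sigma>] (lang_q A q)"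
proof -
  have "(\<pi> l, l) \<in> PA A" using assms(1,2) unfolding is_selection_def by blast
  then show ?thesis using assms(3) by (auto simp: PA_def)
qed

lemma fact_gf:
  assumes "is_selection A \<pi>"
  shows "fact_g A \<pi> l * fact_f A \<pi> l \<gamma> = l \<gamma>"
proof (cases "l = lang A")
  case True then show ?thesis by (simp add: fact_g_def fact_f_def lang_eq)
next
  case False
  show ?thesis
  proof (cases "l \<in> snd ` PA A")
    case True
    then obtain \<sigma> q where s: "\<pi> l = (Some \<sigma>, q)" "q \<in> states A" "l = ldelta [\<sigma>] (lang_q A q)"
      using sel_some[OF assms True False] by blast
    have "fact_g A \<pi> l = wt A q \<sigma>" "fact_f A \<pi> l = lang_q A (delta A q \<sigma>)"
      using s(1) True False by (simp_all add: fact_g_def fact_f_def)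
    then show ?thesis using s(3) by (simp add: lang_q_Cons)
  next
    case F2: False
    then show ?thesis using False by (simp add: fact_g_def fact_f_def)
  qed
qed

lemma fact_f_range:
  assumes "is_mdfa A" "is_selection A \<pi>" "l \<in> snd ` PA A"
  shows "fact_f A \<pi> l \<in> lang_q A ` states A"
proof (cases "l = lang A")
  case True then show ?thesis using assms(1) by (simp add: fact_f_def is_mdfa_def)
next
  case False
  then obtain \<sigma> q where s: "\<pi> l = (Some \<sigma>, q)" "q \<in> states A" "l = ldelta [\<sigma>] (lang_q A q)"
    using sel_some[OF assms(2,3) False] by blast
  then have "fact_f A \<pi> l = lang_q A (delta A q \<sigma>)" using assms(3) False by (simp add: fact_f_def)
  moreover have "delta A q \<sigma> \<in> states A" using assms(1) s(2) by (simp add: is_mdfa_def)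
  ultimately show ?thesis by simp
qed

lemma fact_f_cases:
  assumes "is_mdfa A" "is_selection A \<pi>"
  shows "fact_f A \<pi> l = l \<or> fact_f A \<pi> l \<in> lang_q A ` states A"
proof (cases "l \<in> snd ` PA A")
  case True then show ?thesis using fact_f_range[OF assms] by blast
next
  case False
  moreover have "lang A \<in> snd ` PA A" by (force simp: PA_def)
  ultimately show ?thesis by (auto simp: fact_f_def)
qed

lemma ldelta_in_PA: "q \<in> states A \<Longrightarrow> ldelta [\<sigma>] (lang_q A q) \<in> snd ` PA A"
  by (force simp: PA_def)

lemma Sgf_snoc: "Sgf f (\<alpha> @ [\<sigma>]) l = f (ldelta [\<sigma>] (Sgf f \<alpha> l))"
  by (simp add: Sgf_def)

lemma core:
  fixes A :: "('q, 'a, 'm::monoid_mult) mdfa"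
  assumes "is_mdfa A" "is_selection A \<pi>"
  defines "N \<equiv> Naut (fact_g A \<pi>) (fact_f A \<pi>) (fact_f A \<pi> (lang A)) (fact_g A \<pi> (lang A))"
  shows "is_mdfa N \<and> equivalent N A \<and> transition_equalized N \<and> (minimal A \<longrightarrow> minimal N)"
proof -
  let ?f = "fact_f A \<pi>" and ?g = "fact_g A \<pi>"
  have u: "init A \<in> states A" using assms(1) by (simp add: is_mdfa_def)
  have f0: "?f (lang A) = lang_q A (init A)" by (simp add: fact_f_def)
  have sub: "Sgf ?f \<alpha> (?f (lang A)) \<in> lang_q A ` states A" for \<alpha>
  proof (induction \<alpha> rule: rev_induct)
    case Nil then show ?case using u f0 by (simp add: Sgf_def)
  next
    case (snoc x xs)
    then obtain q where "q \<in> states A" "Sgf ?f xs (?f (lang A)) = lang_q A q" by blast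
    then show ?case using fact_f_range[OF assms(1,2) ldelta_in_PA] by (simp add: Sgf_snoc)
  qed
  have stN: "states N = {Sgf ?f \<alpha> (?f (lang A)) | \<alpha>. True}" by (simp add: N_def Naut_def)
  have stsub: "states N \<subseteq> lang_q A ` states A" using sub stN by auto
  have finA: "finite (states A)" using assms(1) by (simp add: is_mdfa_def)
  have finN: "finite (states N)" using stsub finA finite_surj by blast
  have isN: "is_mdfa N"
    unfolding is_mdfa_def
  proof (intro conjI ballI allI)
    show "finite (states N)" by (rule finN)
    show "init N \<in> states N" using stN by (simp add: N_def Naut_def) (metis Sgf_def foldl_Nil)
    then show "states N \<noteq> {}" by blast
  next
    fix s \<sigma> assume "s \<in> states N"
    then obtain \<alpha> where "s = Sgf ?f \<alpha> (?f (lang A))" using stN by blast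
    then have "delta N s \<sigma> = Sgf ?f (\<alpha> @ [\<sigma>]) (?f (lang A))"
      by (simp add: N_def Naut_def Sgf_snoc)
    then show "delta N s \<sigma> \<in> states N" using stN by blast
  qed
  have lqN: "lang_q N s \<gamma> = s \<gamma>" for s \<gamma>
  proof (induction \<gamma> arbitrary: s)
    case Nil then show ?case by (simp add: N_def Naut_def)
  next
    case (Cons \<sigma> \<gamma>)
    have "lang_q N s (\<sigma> # \<gamma>) = ?g (ldelta [\<sigma>] s) * ?f (ldelta [\<sigma>] s) \<gamma>"
      using Cons by (simp add: lang_q_Cons N_def Naut_def)
    also have "\<dots> = s (\<sigma> # \<gamma>)" using fact_gf[OF assms(2)] by simp
    finally show ?case .
  qed
  have eqN: "equivalent N A" unfolding equivalent_def
  proof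
    fix \<gamma>
    have "lang N \<gamma> = ?g (lang A) * ?f (lang A) \<gamma>" by (simp add: lang_eq lqN) (simp add: N_def Naut_def)
    then show "lang N \<gamma> = lang A \<gamma>" using fact_gf[OF assms(2)] by simp
  qed
  have teN: "transition_equalized N"
    unfolding transition_equalized_def
  proof (intro ballI allI impI)
    fix p q \<sigma> \<tau>
    assume "ldelta [\<sigma>] (lang_q N q) = ldelta [\<tau>] (lang_q N p)"
    moreover have "lang_q N q = q" "lang_q N p = p" using lqN by auto
    ultimately have "ldelta [\<sigma>] q = ldelta [\<tau>] p" by simp
    then show "delta N q \<sigma> = delta N p \<tau> \<and> wt N q \<sigma> = wt N p \<tau>" by (simp add: N_def Naut_def)
  qed
  have "minimal N" if mA: "minimal A"
    unfolding minimal_def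
  proof (intro conjI allI impI)
    show "is_mdfa N" by (rule isN)
    fix B :: "(nat, 'a, 'm) mdfa" assume B: "is_mdfa B \<and> equivalent B N"
    then have "equivalent B A" using eqN by (simp add: equivalent_def)
    then have "card (states A) \<le> card (states B)" using mA B by (simp add: minimal_def)
    moreover have "card (states N) \<le> card (states A)"
      using card_mono[OF finite_imageI[OF finA] stsub] card_image_le[OF finA, of "lang_q A"] by linarith
    ultimately show "card (states N) \<le> card (states B)" by linarith
  qed
  then show ?thesis using isN eqN teN by blast
qed



lemma no_merge:
  fixes A :: "('q, 'a, 'm::monoid_mult) mdfa"
  assumes mA: "minimal A" and r: "r \<in> states A" and s: "s \<in> states A"
    and eq: "\<And>\<gamma>. lang_q A r \<gamma> = m * lang_q A s \<gamma>"
  shows "r = s"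
proof (rule ccontr)
  assume rs: "r \<noteq> s"
  have isA: "is_mdfa A" using mA by (simp add: minimal_def)
  define C :: "('q, 'a, 'm) mdfa" where "C = \<lparr> states = states A - {r},
     init = (if init A = r then s else init A),
     ival = (if init A = r then ival A * m else ival A),
     delta = (\<lambda>q \<sigma>. if delta A q \<sigma> = r then s else delta A q \<sigma>),
     wt = (\<lambda>q \<sigma>. if delta A q \<sigma> = r then wt A q \<sigma> * m else wt A q \<sigma>),
     rho = rho A \<rparr>"
  have cl: "\<And>q \<sigma>. q \<in> states A \<Longrightarrow> delta A q \<sigma> \<in> states A" using isA by (simp add: is_mdfa_def)
  have key: "\<forall>q\<in>states C. lang_q C q \<gamma> = lang_q A q \<gamma>" for \<gamma>
  proof (induction \<gamma>)
    case Nil then show ?case by (simp add: C_def)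
  next
    case (Cons \<sigma> \<gamma>)
    show ?case
    proof
      fix q assume q: "q \<in> states C"
      have qA: "q \<in> states A" using q by (simp add: C_def)
      show "lang_q C q (\<sigma> # \<gamma>) = lang_q A q (\<sigma> # \<gamma>)"
      proof (cases "delta A q \<sigma> = r")
        case True
        have sC: "s \<in> states C" using s rs by (simp add: C_def)
        have "lang_q C q (\<sigma> # \<gamma>) = wt A q \<sigma> * m * lang_q C s \<gamma>"
          using True by (simp add: lang_q_Cons C_def)
        also have "\<dots> = wt A q \<sigma> * (m * lang_q A s \<gamma>)" using Cons sC by (simp add: mult.assoc)
        also have "\<dots> = lang_q A q (\<sigma> # \<gamma>)" using True eq by (simp add: lang_q_Cons)
        finally show ?thesis .
      next
        case False
        have dC: "delta A q \<sigma> \<in> states C" using False cl[OF qA] by (simp add: C_def)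
        have "lang_q C q (\<sigma> # \<gamma>) = wt A q \<sigma> * lang_q C (delta A q \<sigma>) \<gamma>"
          using False by (simp add: lang_q_Cons C_def)
        also have "\<dots> = lang_q A q (\<sigma> # \<gamma>)" using Cons dC by (simp add: lang_q_Cons)
        finally show ?thesis .
      qed
    qed
  qed
  have isC: "is_mdfa C" using isA s rs by (auto simp: is_mdfa_def C_def)
  have eqC: "equivalent C A" unfolding equivalent_def
  proof
    fix \<gamma>
    have iC: "init C \<in> states C" using isC by (simp add: is_mdfa_def)
    show "lang C \<gamma> = lang A \<gamma>"
    proof (cases "init A = r")
      case True
      have "lang C \<gamma> = ival A * m * lang_q C s \<gamma>" using True by (simp add: lang_eq C_def)
      also have "\<dots> = ival A * (m * lang_q A s \<gamma>)" using key iC True by (simp add: C_def mult.assoc)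
      also have "\<dots> = lang A \<gamma>" using True eq by (simp add: lang_eq)
      finally show ?thesis .
    next
      case False
      have "lang C \<gamma> = ival A * lang_q C (init A) \<gamma>" using False by (simp add: lang_eq C_def)
      also have "\<dots> = lang A \<gamma>" using key iC False by (simp add: C_def lang_eq)
      finally show ?thesis .
    qed
  qed
  have "card (states A) \<le> card (states C)" by (rule minimal_any[OF mA isC eqC])
  moreover have "card (states C) < card (states A)"
  proof -
    have "card (states A) > 0" using r isA card_gt_0_iff is_mdfa_def by blast
    then show ?thesis using r by (simp add: C_def)
  qed
  ultimately show False by linarith
qed

lemma f_fix:
  assumes mA: "minimal A" and sel: "is_selection A \<pi>" and r: "r \<in> states A"
  shows "fact_f A \<pi> (lang_q A r) = lang_q A r"
proof -
  have isA: "is_mdfa A" using mA by (simp add: minimal_def)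
  have u: "init A \<in> states A" using isA by (simp add: is_mdfa_def)
  show ?thesis
  proof (cases "lang_q A r = lang A")
    case True
    then have "\<And>\<gamma>. lang_q A r \<gamma> = ival A * lang_q A (init A) \<gamma>" by (metis lang_eq)
    then have ri: "r = init A" using no_merge[OF mA r u] by blast
    have "fact_f A \<pi> (lang_q A r) = lang_q A (init A)" using True by (simp add: fact_f_def)
    then show ?thesis using ri by simp
  next
    case False
    show ?thesis
    proof (cases "lang_q A r \<in> snd ` PA A")
      case True
      then obtain \<sigma> q where s: "\<pi> (lang_q A r) = (Some \<sigma>, q)" "q \<in> states A"
          "lang_q A r = ldelta [\<sigma>] (lang_q A q)"
        using sel_some[OF sel True False] by blast
      have "\<And>\<gamma>. lang_q A r \<gamma> = wt A q \<sigma> * lang_q A (delta A q \<sigma>) \<gamma>"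
        using s(3) by (simp add: lang_q_Cons)
      moreover have "delta A q \<sigma> \<in> states A" using isA s(2) by (simp add: is_mdfa_def)
      ultimately have "r = delta A q \<sigma>" using no_merge[OF mA r] by blast
      then show ?thesis using s(1) True False by (simp add: fact_f_def)
    next
      case F2: False
      then show ?thesis using False by (simp add: fact_f_def)
    qed
  qed
qed

lemma claim5:
  assumes mA: "minimal A" and sel: "is_selection A \<pi>"
  shows "fact_f A \<pi> \<circ> fact_f A \<pi> = fact_f A \<pi>"
proof
  fix l
  have isA: "is_mdfa A" using mA by (simp add: minimal_def)
  from fact_f_cases[OF isA sel, of l] show "(fact_f A \<pi> \<circ> fact_f A \<pi>) l = fact_f A \<pi> l"
    using f_fix[OF mA sel] by auto
qed

lemma claim6:
  assumes isA: "is_mdfa A" and te: "transition_equalized A"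
    and s1: "is_selection A \<pi>1" and s2: "is_selection A \<pi>2"
  shows "fact_f A \<pi>1 = fact_f A \<pi>2"
proof
  fix l
  show "fact_f A \<pi>1 l = fact_f A \<pi>2 l"
  proof (cases "l \<noteq> lang A \<and> l \<in> snd ` PA A")
    case True
    then obtain \<sigma>1 q1 where a: "\<pi>1 l = (Some \<sigma>1, q1)" "q1 \<in> states A" "l = ldelta [\<sigma>1] (lang_q A q1)"
      using sel_some[OF s1] by blast
    obtain \<sigma>2 q2 where b: "\<pi>2 l = (Some \<sigma>2, q2)" "q2 \<in> states A" "l = ldelta [\<sigma>2] (lang_q A q2)"
      using sel_some[OF s2] True by blast
    have "delta A q1 \<sigma>1 = delta A q2 \<sigma>2" using te a b unfolding transition_equalized_def by metis
    then show ?thesis using a b True by (simp add: fact_f_def)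
  next
    case False
    then show ?thesis by (auto simp: fact_f_def)
  qed
qed

lemma sel_exists:
  "\<exists>\<pi>. is_selection A \<pi>"
proof -
  define \<pi> where "\<pi> = (\<lambda>l. if l = lang A then (None, init A) else SOME x. (x, l) \<in> PA A)"
  have "is_selection A \<pi>" unfolding is_selection_def
  proof (intro conjI ballI)
    fix l assume l: "l \<in> snd ` PA A"
    show "(\<pi> l, l) \<in> PA A"
    proof (cases "l = lang A")
      case True then show ?thesis by (simp add: \<pi>_def PA_def)
    next
      case False
      from l obtain x where x: "(x, l) \<in> PA A" by force
      have "(SOME x. (x, l) \<in> PA A, l) \<in> PA A" using someI[of "\<lambda>x. (x, l) \<in> PA A", OF x] .
      then show ?thesis using False unfolding \<pi>_def by simp
    qed
  qed (simp add: \<pi>_def)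
  then show ?thesis by blast
qed

lemma claim4:
  fixes A :: "('q, 'a, 'm::monoid_mult) mdfa"
  assumes isA: "is_mdfa A"
  shows "\<exists>B :: (('a, 'm) lang, 'a, 'm) mdfa. minimal B \<and> transition_equalized B \<and> equivalent B A"
proof -
  let ?P = "\<lambda>B :: (nat, 'a, 'm) mdfa. is_mdfa B \<and> equivalent B A"
  obtain C where C: "?P C" using rename_nat[OF isA] by blast
  define B0 where "B0 = arg_min (card \<circ> states) ?P"
  have B0: "?P B0" "\<forall>y. ?P y \<longrightarrow> card (states B0) \<le> card (states y)"
    using arg_min_nat_lemma[of ?P C "card \<circ> states", OF C] unfolding B0_def by auto
  have mB0: "minimal B0" unfolding minimal_def
  proof (intro conjI allI impI)
    show "is_mdfa B0" using B0 by blast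
    fix B :: "(nat, 'a, 'm) mdfa" assume "is_mdfa B \<and> equivalent B B0"
    then have "?P B" using B0 by (simp add: equivalent_def)
    then show "card (states B0) \<le> card (states B)" using B0 by blast
  qed
  obtain \<pi> where sel: "is_selection B0 \<pi>" using sel_exists by blast
  have "is_mdfa (Naut (fact_g B0 \<pi>) (fact_f B0 \<pi>) (fact_f B0 \<pi> (lang B0)) (fact_g B0 \<pi> (lang B0))) \<and> equivalent (Naut (fact_g B0 \<pi>) (fact_f B0 \<pi>) (fact_f B0 \<pi> (lang B0)) (fact_g B0 \<pi> (lang B0))) B0 \<and> transition_equalized (Naut (fact_g B0 \<pi>) (fact_f B0 \<pi>) (fact_f B0 \<pi> (lang B0)) (fact_g B0 \<pi> (lang B0))) \<and> (minimal B0 \<longrightarrow> minimal (Naut (fact_g B0 \<pi>) (fact_f B0 \<pi>) (fact_f B0 \<pi> (lang B0)) (fact_g B0 \<pi> (lang B0))))"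
    by (rule core[OF _ sel]) (use B0 in blast)
  then show ?thesis using mB0 B0(1) by (metis equivalent_def)
qed

theorem mainTheorem11:
  fixes A :: "('q, 'a::finite, 'm::monoid_mult) mdfa"
    and \<pi> :: "('a, 'm) lang \<Rightarrow> 'a option \<times> 'q"
  assumes "is_mdfa A"
    and "is_selection A \<pi>"
  defines "N \<equiv> Naut (fact_g A \<pi>) (fact_f A \<pi>) (fact_f A \<pi> (lang A)) (fact_g A \<pi> (lang A))"
  shows "(is_mdfa N \<and> equivalent N A)
    \<and> transition_equalized N
    \<and> (minimal A \<longrightarrow> minimal N)
    \<and> (\<exists>B :: (('a, 'm) lang, 'a, 'm) mdfa. minimal B \<and> transition_equalized B \<and> equivalent B A)
    \<and> (minimal A \<longrightarrow> fact_f A \<pi> \<circ> fact_f A \<pi> = fact_f A \<pi>)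
    \<and> (minimal A \<and> transition_equalized A \<longrightarrow>
           (\<forall>\<pi>1 \<pi>2. is_selection A \<pi>1 \<and> is_selection A \<pi>2 \<longrightarrow> fact_f A \<pi>1 = fact_f A \<pi>2))"
  using core[OF assms(1,2)] claim4[OF assms(1)] claim5[OF _ assms(2)] claim6[OF assms(1)]
  unfolding N_def by blast


end
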